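(* Let $k\ge 2$. If $G$ is a finite simple graph admitting a closed neighborhood balanced $k$-coloring and $H$ is any finite simple graph, then the strong product $G\boxtimes H$ admits a closed neighborhood balanced $k$-coloring.
   Context: For a vertex $v$, $N[v]=\{v\}\cup\{u : uv\in E\}$. A closed neighborhood balanced $k$-coloring of a graph is a map $c: V\to\{1,\dots,k\}$ such that for every vertex $v$ the numbers $|\{u\in N[v] : c(u)=i\}|$, $i=1,\dots,k$, are all equal. The strong product $G\boxtimes H$ has vertex set $V(G)\times V(H)$, with $(g,h)$ adjacent to $(g',h')$ iff ($g=g'$ and $hh'\in E(H)$) or ($h=h'$ and $gg'\in E(G)$) or ($gg'\in E(G)$ and $hh'\in E(H)$). *)

theory Defs
  imports Main
begin

definition simple_graph :: "'a set \<Rightarrow> 'a set set \<Rightarrow> bool" where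
  "simple_graph V E \<longleftrightarrow> finite V \<and> (\<forall>e\<in>E. e \<subseteq> V \<and> card e = 2)"

definition closed_nbhd :: "'a set \<Rightarrow> 'a set set \<Rightarrow> 'a \<Rightarrow> 'a set" where
  "closed_nbhd V E v = {v} \<union> {u \<in> V. {u, v} \<in> E}"

definition cnb_coloring :: "'a set \<Rightarrow> 'a set set \<Rightarrow> nat \<Rightarrow> ('a \<Rightarrow> nat) \<Rightarrow> bool" where
  "cnb_coloring V E k c \<longleftrightarrow>
     (\<forall>v\<in>V. c v \<in> {1..k}) \<and>
     (\<forall>v\<in>V. \<forall>i\<in>{1..k}. \<forall>j\<in>{1..k}.
        card {u \<in> closed_nbhd V E v. c u = i} = card {u \<in> closed_nbhd V E v. c u = j})"

definition has_cnb_coloring :: "'a set \<Rightarrow> 'a set set \<Rightarrow> nat \<Rightarrow> bool" where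
  "has_cnb_coloring V E k \<longleftrightarrow> (\<exists>c. cnb_coloring V E k c)"

definition strong_product_edges ::
  "'a set \<Rightarrow> 'a set set \<Rightarrow> 'b set \<Rightarrow> 'b set set \<Rightarrow> ('a \<times> 'b) set set" where
  "strong_product_edges VG EG VH EH =
     {{(g, h), (g', h')} | g h g' h'.
        g \<in> VG \<and> g' \<in> VG \<and> h \<in> VH \<and> h' \<in> VH \<and>
        ((g = g' \<and> {h, h'} \<in> EH) \<or> (h = h' \<and> {g, g'} \<in> EG) \<or>
         ({g, g'} \<in> EG \<and> {h, h'} \<in> EH))}"

end

theory Submission
  imports Defs
begin

lemma nbhd_prod:
  assumes "g \<in> VG" "h \<in> VH"
  shows "closed_nbhd (VG \<times> VH) (strong_product_edges VG EG VH EH) (g, h)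
       = closed_nbhd VG EG g \<times> closed_nbhd VH EH h"
proof (rule set_eqI)
  fix x :: "'a \<times> 'b"
  obtain g' h' where x: "x = (g', h')" by (cases x)
  show "x \<in> closed_nbhd (VG \<times> VH) (strong_product_edges VG EG VH EH) (g, h)
       \<longleftrightarrow> x \<in> closed_nbhd VG EG g \<times> closed_nbhd VH EH h"
  proof
    assume "x \<in> closed_nbhd (VG \<times> VH) (strong_product_edges VG EG VH EH) (g, h)"
    then consider "x = (g, h)" | "{(g', h'), (g, h)} \<in> strong_product_edges VG EG VH EH"
      unfolding closed_nbhd_def x by auto
    then show "x \<in> closed_nbhd VG EG g \<times> closed_nbhd VH EH h"
    proof cases
      case 1 then show ?thesis by (simp add: closed_nbhd_def)
    next
      case 2
      then obtain a b a' b' where e: "{(g', h'), (g, h)} = {(a, b), (a', b')}"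
        and c: "a \<in> VG" "a' \<in> VG" "b \<in> VH" "b' \<in> VH"
        "(a = a' \<and> {b, b'} \<in> EH) \<or> (b = b' \<and> {a, a'} \<in> EG) \<or>
         ({a, a'} \<in> EG \<and> {b, b'} \<in> EH)"
        unfolding strong_product_edges_def by blast
      from e have "(g' = a \<and> h' = b \<and> g = a' \<and> h = b') \<or> (g' = a' \<and> h' = b' \<and> g = a \<and> h = b)"
        by (auto simp: doubleton_eq_iff)
      then show ?thesis using c unfolding x closed_nbhd_def
        by (auto simp: insert_commute)
    qed
  next
    assume "x \<in> closed_nbhd VG EG g \<times> closed_nbhd VH EH h"
    then have g': "g' = g \<or> (g' \<in> VG \<and> {g', g} \<in> EG)" and h': "h' = h \<or> (h' \<in> VH \<and> {h', h} \<in> EH)"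
      unfolding x closed_nbhd_def by auto
    show "x \<in> closed_nbhd (VG \<times> VH) (strong_product_edges VG EG VH EH) (g, h)"
    proof (cases "x = (g, h)")
      case True then show ?thesis by (simp add: closed_nbhd_def)
    next
      case False
      have gv: "g' \<in> VG" and hv: "h' \<in> VH" using g' h' assms by auto
      have "(g' = g \<and> {h', h} \<in> EH) \<or> (h' = h \<and> {g', g} \<in> EG) \<or> ({g', g} \<in> EG \<and> {h', h} \<in> EH)"
        using g' h' False x by auto
      then have "{(g', h'), (g, h)} \<in> strong_product_edges VG EG VH EH"
        unfolding strong_product_edges_def using gv hv assms by blast
      then show ?thesis unfolding closed_nbhd_def x using gv hv by auto
    qed
  qed
qed

theorem theorem2p18:
  fixes VG :: "'a set" and EG :: "'a set set" and VH :: "'b set" and EH :: "'b set set"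
    and k :: nat
  assumes "k \<ge> 2"
    and "simple_graph VG EG" and "simple_graph VH EH"
    and "has_cnb_coloring VG EG k"
  shows "has_cnb_coloring (VG \<times> VH) (strong_product_edges VG EG VH EH) k"
proof -
  obtain c where c: "cnb_coloring VG EG k c" using assms(4) unfolding has_cnb_coloring_def by blast
  have "cnb_coloring (VG \<times> VH) (strong_product_edges VG EG VH EH) k (c \<circ> fst)"
    unfolding cnb_coloring_def
  proof (intro conjI ballI)
    fix v assume "v \<in> VG \<times> VH" then show "(c \<circ> fst) v \<in> {1..k}"
      using c unfolding cnb_coloring_def by auto
  next
    fix v i j assume v: "v \<in> VG \<times> VH" and i: "i \<in> {1..k}" and j: "j \<in> {1..k}"
    obtain g h where gh: "v = (g, h)" "g \<in> VG" "h \<in> VH" using v by auto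
    have eq: "\<And>i. {u \<in> closed_nbhd (VG \<times> VH) (strong_product_edges VG EG VH EH) v. (c \<circ> fst) u = i}
       = {u \<in> closed_nbhd VG EG g. c u = i} \<times> closed_nbhd VH EH h"
      using nbhd_prod[OF gh(2,3)] gh(1) by auto
    have "card {u \<in> closed_nbhd VG EG g. c u = i} = card {u \<in> closed_nbhd VG EG g. c u = j}"
      using c gh i j unfolding cnb_coloring_def by blast
    then show "card {u \<in> closed_nbhd (VG \<times> VH) (strong_product_edges VG EG VH EH) v. (c \<circ> fst) u = i}
       = card {u \<in> closed_nbhd (VG \<times> VH) (strong_product_edges VG EG VH EH) v. (c \<circ> fst) u = j}"
      unfolding eq card_cartesian_product by simp
  qed
  then show ?thesis unfolding has_cnb_coloring_def by blast
qed

end
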